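(* Let $M$ be a unicyclic partial multiplication matrix, let $\pi^\#$ be a gridded $M$-coil with points $v_1,\dots,v_n$ and let $\sigma^\#$ be a gridded $M$-coil with points $u_1,\dots,u_m$ (each ordered as in the definition of a coil), where $m<n$. Let $L=\{\bullet,\circ\}$ be a two-element antichain, and label $\pi^\#$ by $\ell(v_i)=\bullet$ for $1<i<n$ and $\ell(v_1)=\ell(v_n)=\circ$, and $\sigma^\#$ by $\ell(u_i)=\bullet$ for $1<i<m$ and $\ell(u_1)=\ell(u_m)=\circ$. Then there is no labelled embedding of the labelled gridded permutation $\sigma^\#$ into the labelled gridded permutation $\pi^\#$.
   Context: A gridding matrix has entries in $\{0,1,-1\}$; an $m\times n$ one has $m$ columns, $n$ rows, $M_{ij}$ in column $i$ from the left and row $j$ from the bottom. An $M$-gridding of a permutation $\pi$ of length $L$ is a choice of vertical lines $\tfrac12=v_0\le\dots\le v_m=L+\tfrac12$ and horizontal lines $\tfrac12=h_0\le\dots\le h_n=L+\tfrac12$, not through points of $\pi$, such that in each cell $C_{ij}=\{v_{i-1}<x<v_i,\ h_{j-1}<y<h_j\}$ the points of $\pi$ are absent if $M_{ij}=0$, increasing if $M_{ij}=1$, decreasing if $M_{ij}=-1$; the result is an $M$-gridded permutation. The row-column graph $G_M$ is the bipartite graph on $\{1,\dots,m\}\cup\{1',\dots,n'\}$ with edge $ij'$ iff $M_{ij}\neq0$; $M$ is unicyclic if $G_M$ has exactly one cycle. A labelled embedding of a labelled gridded permutation $\sigma^\#$ into $\pi^\#$ is a subsequence of $\pi$ order-isomorphic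 to $\sigma$ mapping each point of $\sigma^\#$ to a point in the cell with the same index and with the same label (labels form an antichain). $M$ is a partial multiplication matrix: there are fixed $c_1,\dots,c_m,r_1,\dots,r_n\in\{\pm1\}$ with $M_{ij}=c_ir_j$ for each non-zero entry. Column $i$ is oriented left-to-right if $c_i=1$, right-to-left otherwise; row $j$ bottom-to-top if $r_j=1$, top-to-bottom otherwise. The orientation digraph of an $M$-gridded permutation has its points as vertices with $x\to y$ whenever $x,y$ lie in a common column of cells and $x$ precedes $y$ in that column's orientation, or in a common row of cells and $x$ precedes $y$ in that row's orientation. Let $\ell$ be the length of the cycle of $G_M$. A gridded $M$-coil is an $M$-gridded permutation of length $n>\ell$ with an ordering $v_1,\dots,v_n$ of its points and a labelling by $1,\dots,\ell$ of the cells corresponding to the edges of the cycle such that (C1) $v_i$ lies in cell $i\bmod\ell$ (residues in $\{1,\dots,\ell\}$); (C2) $v_{i-1}\to v_i$ for $1<i\le n$; (C3) $v_i\to v_{i-\ell-1}$ for $\ell+1<i\le n$; (C4) $v_{\ell+1}\to v_1$. *)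

theory Defs
  imports Main "HOL.Real"
begin

text \<open>A permutation of length L is a bijection of {1..L}; its points are (x, pi x) for x in {1..L}.
  Points are identified with their x-coordinate (position).\<close>

definition is_perm :: "nat \<Rightarrow> (nat \<Rightarrow> nat) \<Rightarrow> bool" where
  "is_perm L pi \<longleftrightarrow> bij_betw pi {1..L} {1..L}"

text \<open>A gridding matrix with p columns and q rows; entry M i j is in column i, row j (1-based).\<close>

definition gridding_matrix :: "(nat \<Rightarrow> nat \<Rightarrow> int) \<Rightarrow> nat \<Rightarrow> nat \<Rightarrow> bool" where
  "gridding_matrix M p q \<longleftrightarrow> (\<forall>i\<in>{1..p}. \<forall>j\<in>{1..q}. M i j \<in> {0, 1, -1})"

definition partial_mult_matrix ::
  "(nat \<Rightarrow> nat \<Rightarrow> int) \<Rightarrow> nat \<Rightarrow> nat \<Rightarrow> (nat \<Rightarrow> int) \<Rightarrow> (nat \<Rightarrow> int) \<Rightarrow> bool" where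
  "partial_mult_matrix M p q c r \<longleftrightarrow> gridding_matrix M p q
     \<and> (\<forall>i\<in>{1..p}. c i \<in> {1, -1}) \<and> (\<forall>j\<in>{1..q}. r j \<in> {1, -1})
     \<and> (\<forall>i\<in>{1..p}. \<forall>j\<in>{1..q}. M i j \<noteq> 0 \<longrightarrow> M i j = c i * r j)"

definition in_cell :: "(nat \<Rightarrow> real) \<Rightarrow> (nat \<Rightarrow> real) \<Rightarrow> (nat \<Rightarrow> nat) \<Rightarrow> nat \<Rightarrow> nat \<Rightarrow> nat \<Rightarrow> bool" where
  "in_cell v h pi i j x \<longleftrightarrow> v (i - 1) < real x \<and> real x < v i \<and> h (j - 1) < real (pi x) \<and> real (pi x) < h j"

definition gridded ::
  "(nat \<Rightarrow> nat \<Rightarrow> int) \<Rightarrow> nat \<Rightarrow> nat \<Rightarrow> nat \<Rightarrow> (nat \<Rightarrow> nat) \<Rightarrow> (nat \<Rightarrow> real) \<Rightarrow> (nat \<Rightarrow> real) \<Rightarrow> bool" where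
  "gridded M p q L pi v h \<longleftrightarrow> is_perm L pi
     \<and> v 0 = 1/2 \<and> v p = real L + 1/2 \<and> (\<forall>k<p. v k \<le> v (Suc k))
     \<and> h 0 = 1/2 \<and> h q = real L + 1/2 \<and> (\<forall>k<q. h k \<le> h (Suc k))
     \<and> (\<forall>k\<le>p. \<forall>x\<in>{1..L}. v k \<noteq> real x)
     \<and> (\<forall>k\<le>q. \<forall>x\<in>{1..L}. h k \<noteq> real (pi x))
     \<and> (\<forall>i\<in>{1..p}. \<forall>j\<in>{1..q}.
          (M i j = 0 \<longrightarrow> (\<forall>x\<in>{1..L}. \<not> in_cell v h pi i j x))
        \<and> (M i j = 1 \<longrightarrow> (\<forall>x\<in>{1..L}. \<forall>y\<in>{1..L}.
              in_cell v h pi i j x \<and> in_cell v h pi i j y \<and> x < y \<longrightarrow> pi x < pi y))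
        \<and> (M i j = -1 \<longrightarrow> (\<forall>x\<in>{1..L}. \<forall>y\<in>{1..L}.
              in_cell v h pi i j x \<and> in_cell v h pi i j y \<and> x < y \<longrightarrow> pi x > pi y)))"

text \<open>Vertices: Inl i for column i, Inr j for row j'. Edges are 2-element sets.\<close>

definition rc_edges :: "(nat \<Rightarrow> nat \<Rightarrow> int) \<Rightarrow> nat \<Rightarrow> nat \<Rightarrow> (nat + nat) set set" where
  "rc_edges M p q = {{Inl i, Inr j} | i j. i \<in> {1..p} \<and> j \<in> {1..q} \<and> M i j \<noteq> 0}"

definition is_cycle :: "'a set set \<Rightarrow> 'a list \<Rightarrow> bool" where
  "is_cycle E ws \<longleftrightarrow> distinct ws \<and> length ws \<ge> 3
     \<and> (\<forall>k<length ws. {ws ! k, ws ! (Suc k mod length ws)} \<in> E)"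

definition cycle_edges :: "'a list \<Rightarrow> 'a set set" where
  "cycle_edges ws = {{ws ! k, ws ! (Suc k mod length ws)} | k. k < length ws}"

definition cycles_of :: "'a set set \<Rightarrow> 'a set set set" where
  "cycles_of E = {cycle_edges ws | ws. is_cycle E ws}"

definition unicyclic :: "(nat \<Rightarrow> nat \<Rightarrow> int) \<Rightarrow> nat \<Rightarrow> nat \<Rightarrow> bool" where
  "unicyclic M p q \<longleftrightarrow> (\<exists>!C. C \<in> cycles_of (rc_edges M p q))"

definition the_cycle :: "(nat \<Rightarrow> nat \<Rightarrow> int) \<Rightarrow> nat \<Rightarrow> nat \<Rightarrow> (nat + nat) set set" where
  "the_cycle M p q = (THE C. C \<in> cycles_of (rc_edges M p q))"

definition cycle_len :: "(nat \<Rightarrow> nat \<Rightarrow> int) \<Rightarrow> nat \<Rightarrow> nat \<Rightarrow> nat" where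
  "cycle_len M p q = card (the_cycle M p q)"

definition cycle_cells :: "(nat \<Rightarrow> nat \<Rightarrow> int) \<Rightarrow> nat \<Rightarrow> nat \<Rightarrow> (nat \<times> nat) set" where
  "cycle_cells M p q = {(i, j). {Inl i, Inr j} \<in> the_cycle M p q}"

definition orient_arrow ::
  "nat \<Rightarrow> nat \<Rightarrow> (nat \<Rightarrow> int) \<Rightarrow> (nat \<Rightarrow> int) \<Rightarrow> (nat \<Rightarrow> real) \<Rightarrow> (nat \<Rightarrow> real) \<Rightarrow> (nat \<Rightarrow> nat)
   \<Rightarrow> nat \<Rightarrow> nat \<Rightarrow> bool" where
  "orient_arrow p q c r v h pi x y \<longleftrightarrow>
     (\<exists>i\<in>{1..p}. v (i - 1) < real x \<and> real x < v i \<and> v (i - 1) < real y \<and> real y < v i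
        \<and> ((c i = 1 \<and> x < y) \<or> (c i = -1 \<and> y < x)))
   \<or> (\<exists>j\<in>{1..q}. h (j - 1) < real (pi x) \<and> real (pi x) < h j \<and> h (j - 1) < real (pi y) \<and> real (pi y) < h j
        \<and> ((r j = 1 \<and> pi x < pi y) \<or> (r j = -1 \<and> pi y < pi x)))"

text \<open>w i is the point v_i (as a position); lab labels the cycle cells by 1..ell.\<close>

definition gridded_coil ::
  "(nat \<Rightarrow> nat \<Rightarrow> int) \<Rightarrow> nat \<Rightarrow> nat \<Rightarrow> (nat \<Rightarrow> int) \<Rightarrow> (nat \<Rightarrow> int) \<Rightarrow> nat \<Rightarrow> (nat \<Rightarrow> nat)
   \<Rightarrow> (nat \<Rightarrow> real) \<Rightarrow> (nat \<Rightarrow> real) \<Rightarrow> (nat \<Rightarrow> nat) \<Rightarrow> (nat \<times> nat \<Rightarrow> nat) \<Rightarrow> bool" where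
  "gridded_coil M p q c r N pi v h w lab \<longleftrightarrow>
     (let ell = cycle_len M p q; arr = orient_arrow p q c r v h pi in
       gridded M p q N pi v h \<and> N > ell
     \<and> bij_betw w {1..N} {1..N}
     \<and> bij_betw lab (cycle_cells M p q) {1..ell}
     \<and> (\<forall>i\<in>{1..N}. \<exists>ij\<in>cycle_cells M p q.
           in_cell v h pi (fst ij) (snd ij) (w i) \<and> lab ij = (i - 1) mod ell + 1)
     \<and> (\<forall>i. 1 < i \<and> i \<le> N \<longrightarrow> arr (w (i - 1)) (w i))
     \<and> (\<forall>i. ell + 1 < i \<and> i \<le> N \<longrightarrow> arr (w i) (w (i - ell - 1)))
     \<and> arr (w (ell + 1)) (w 1))"

datatype lbl = Bullet | Circ

definition coil_label :: "(nat \<Rightarrow> nat) \<Rightarrow> nat \<Rightarrow> nat \<Rightarrow> lbl" where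
  "coil_label w N x = (if x = w 1 \<or> x = w N then Circ else Bullet)"

text \<open>Labelled embedding of (sigma, vs, hs, ls) of length m into (pi, vp, hp, lp) of length n.
  Labels form an antichain, so labels must be equal.\<close>

definition labelled_embedding ::
  "nat \<Rightarrow> nat \<Rightarrow> nat \<Rightarrow> (nat \<Rightarrow> nat) \<Rightarrow> (nat \<Rightarrow> real) \<Rightarrow> (nat \<Rightarrow> real) \<Rightarrow> (nat \<Rightarrow> 'l)
   \<Rightarrow> nat \<Rightarrow> (nat \<Rightarrow> nat) \<Rightarrow> (nat \<Rightarrow> real) \<Rightarrow> (nat \<Rightarrow> real) \<Rightarrow> (nat \<Rightarrow> 'l) \<Rightarrow> bool" where
  "labelled_embedding p q m sigma vs hs ls n pi vp hp lp \<longleftrightarrow>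
     (\<exists>f. strict_mono_on {1..m} f \<and> f ` {1..m} \<subseteq> {1..n}
        \<and> (\<forall>a\<in>{1..m}. \<forall>b\<in>{1..m}. sigma a < sigma b \<longleftrightarrow> pi (f a) < pi (f b))
        \<and> (\<forall>a\<in>{1..m}. \<forall>i\<in>{1..p}. \<forall>j\<in>{1..q}.
              in_cell vs hs sigma i j a \<longrightarrow> in_cell vp hp pi i j (f a))
        \<and> (\<forall>a\<in>{1..m}. ls a = lp (f a)))"

end

theory Submission
  imports Defs
begin


lemma modge: "(a::nat) < b \<Longrightarrow> a mod ell = b mod ell \<Longrightarrow> 0 < ell \<Longrightarrow> a + ell \<le> b"
proof -
  assume h: "a < b" "a mod ell = b mod ell" "0 < ell"
  then have "ell dvd (b - a)" by (metis less_imp_le mod_eq_dvd_iff_nat)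
  then obtain k where k: "b - a = ell * k" by auto
  have "k \<noteq> 0"
  proof
    assume "k = 0" with k have "b - a = 0" by simp
    with h show False by simp
  qed
  then have "ell * k \<ge> ell" by simp
  with k h show ?thesis by linarith
qed

lemma mod_nek: "0 < (k::nat) \<Longrightarrow> k < ell \<Longrightarrow> x mod ell \<noteq> (x+k) mod ell"
proof
  assume h: "0 < k" "k < ell" "x mod ell = (x+k) mod ell"
  then have "ell dvd k" using mod_eq_dvd_iff_nat[of x "x+k" ell] by simp
  with h show False by (simp add: nat_dvd_not_less)
qed

lemma mod_suc_cancel: "0 < (ell::nat) \<Longrightarrow> (x+1) mod ell = (y+1) mod ell \<Longrightarrow> x mod ell = y mod ell"
proof -
  assume h: "(x+1) mod ell = (y+1) mod ell"
  show ?thesis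
  proof (cases "x \<le> y")
    case True
    then have "ell dvd (y+1) - (x+1)" using h mod_eq_dvd_iff_nat[of "x+1" "y+1" ell] by simp
    then show ?thesis using True mod_eq_dvd_iff_nat[of x y ell] by simp
  next
    case False
    then have "ell dvd (x+1) - (y+1)" using h mod_eq_dvd_iff_nat[of "y+1" "x+1" ell] by simp
    then show ?thesis using False mod_eq_dvd_iff_nat[of y x ell] by simp
  qed
qed

lemma mod_add_cong1: "(x::nat) mod l = y mod l \<Longrightarrow> (x+k) mod l = (y+k) mod l"
proof -
  assume h: "x mod l = y mod l"
  have "(x+k) mod l = (x mod l + k) mod l" by (simp add: mod_add_left_eq)
  also have "\<dots> = (y mod l + k) mod l" using h by simp
  also have "\<dots> = (y+k) mod l" by (simp add: mod_add_left_eq)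
  finally show ?thesis .
qed

locale acoil =
  fixes N ell :: nat and col row :: "nat \<Rightarrow> nat" and AC AR :: "nat \<Rightarrow> nat \<Rightarrow> bool"
  assumes ell3: "3 \<le> ell" and ellN: "ell < N"
  and same_iff: "\<And>a b. a \<in> {1..N} \<Longrightarrow> b \<in> {1..N} \<Longrightarrow> (col a = col b \<and> row a = row b) \<longleftrightarrow> a mod ell = b mod ell"
  and AC_col: "\<And>a b. AC a b \<Longrightarrow> col a = col b"
  and AR_row: "\<And>a b. AR a b \<Longrightarrow> row a = row b"
  and AC_trans: "\<And>a b c. AC a b \<Longrightarrow> AC b c \<Longrightarrow> AC a c"
  and AR_trans: "\<And>a b c. AR a b \<Longrightarrow> AR b c \<Longrightarrow> AR a c"
  and AC_asym: "\<And>a b. AC a b \<Longrightarrow> \<not> AC b a"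
  and AR_asym: "\<And>a b. AR a b \<Longrightarrow> \<not> AR b a"
  and cons: "\<And>a b. a \<in> {1..N} \<Longrightarrow> b \<in> {1..N} \<Longrightarrow> col a = col b \<Longrightarrow> row a = row b \<Longrightarrow> AC a b \<longleftrightarrow> AR a b"
  and deg_col: "\<And>x y z. x \<in> {1..N} \<Longrightarrow> y \<in> {1..N} \<Longrightarrow> z \<in> {1..N} \<Longrightarrow> col x = col y \<Longrightarrow> col y = col z
      \<Longrightarrow> row x \<noteq> row y \<Longrightarrow> row y \<noteq> row z \<Longrightarrow> row x \<noteq> row z \<Longrightarrow> False"
  and deg_row: "\<And>x y z. x \<in> {1..N} \<Longrightarrow> y \<in> {1..N} \<Longrightarrow> z \<in> {1..N} \<Longrightarrow> row x = row y \<Longrightarrow> row y = row z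
      \<Longrightarrow> col x \<noteq> col y \<Longrightarrow> col y \<noteq> col z \<Longrightarrow> col x \<noteq> col z \<Longrightarrow> False"
  and A2: "\<And>i. 2 \<le> i \<Longrightarrow> i \<le> N \<Longrightarrow> AC (i-1) i \<or> AR (i-1) i"
  and A3: "\<And>i. ell + 1 < i \<Longrightarrow> i \<le> N \<Longrightarrow> AC i (i-ell-1) \<or> AR i (i-ell-1)"
  and A4: "AC (ell+1) 1 \<or> AR (ell+1) 1"
begin

definition arr where "arr a b \<longleftrightarrow> AC a b \<or> AR a b"
definition sc where "sc a b \<longleftrightarrow> col a = col b \<and> row a = row b"

lemma sc_iff: "a \<in> {1..N} \<Longrightarrow> b \<in> {1..N} \<Longrightarrow> sc a b \<longleftrightarrow> a mod ell = b mod ell"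
  using same_iff sc_def by auto

lemma arr_asym: "a \<in> {1..N} \<Longrightarrow> b \<in> {1..N} \<Longrightarrow> arr a b \<Longrightarrow> \<not> arr b a"
proof
  assume r: "a \<in> {1..N}" "b \<in> {1..N}" "arr a b" "arr b a"
  have d: "AC a b \<or> AR a b" "AC b a \<or> AR b a" using r arr_def by auto
  show False
  proof (cases "AC a b")
    case True
    show False
    proof (cases "AC b a")
      case True then show False using \<open>AC a b\<close> AC_asym by blast
    next
      case False
      then have "AR b a" using d by blast
      then have "AC b a" using cons[OF r(2) r(1)] AC_col[OF \<open>AC a b\<close>] AR_row[OF \<open>AR b a\<close>] by simp
      with False show False by blast
    qed
  next
    case False
    then have ab: "AR a b" using d by blast
    show False
    proof (cases "AR b a")
      case True then show False using ab AR_asym by blast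
    next
      case False
      then have "AC b a" using d by blast
      then have "AR b a" using cons[OF r(2) r(1)] AR_row[OF ab] AC_col[OF \<open>AC b a\<close>] by simp
      with False show False by blast
    qed
  qed
qed

lemma arr_trans: "a \<in> {1..N} \<Longrightarrow> b \<in> {1..N} \<Longrightarrow> c \<in> {1..N} \<Longrightarrow> arr a b \<Longrightarrow> arr b c
   \<Longrightarrow> sc a b \<or> sc b c \<or> sc a c \<Longrightarrow> arr a c"
proof -
  assume r: "a \<in> {1..N}" "b \<in> {1..N}" "c \<in> {1..N}" "arr a b" "arr b c" "sc a b \<or> sc b c \<or> sc a c"
  have both: "\<And>x y. x \<in> {1..N} \<Longrightarrow> y \<in> {1..N} \<Longrightarrow> sc x y \<Longrightarrow> arr x y \<Longrightarrow> AC x y \<and> AR x y"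
    using cons unfolding sc_def arr_def by blast
  have c1: "sc a b \<Longrightarrow> arr a c"
  proof -
    assume "sc a b" then have "AC a b \<and> AR a b" using both r by blast
    then show "arr a c" using r(5) AC_trans AR_trans unfolding arr_def by blast
  qed
  have c2: "sc b c \<Longrightarrow> arr a c"
  proof -
    assume "sc b c" then have "AC b c \<and> AR b c" using both r by blast
    then show "arr a c" using r(4) AC_trans AR_trans unfolding arr_def by blast
  qed
  have c3: "sc a c \<Longrightarrow> arr a c"
  proof -
    assume s: "sc a c"
    have d: "AC a b \<or> AR a b" "AC b c \<or> AR b c" using r arr_def by auto
    show "arr a c"
    proof (cases "(AC a b \<and> AC b c) \<or> (AR a b \<and> AR b c)")
      case True then show ?thesis using AC_trans AR_trans unfolding arr_def by blast
    next
      case False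
      then have "(AC a b \<and> AR b c) \<or> (AR a b \<and> AC b c)" using d by blast
      then have "sc a b" using s AC_col AR_row unfolding sc_def by metis
      then show ?thesis using c1 by blast
    qed
  qed
  show "arr a c" using r(6) c1 c2 c3 by blast
qed

lemma cellchain: "1 \<le> a \<Longrightarrow> a + ell \<le> N \<Longrightarrow> arr (a+ell) a"
proof -
  assume h: "1 \<le> a" "a + ell \<le> N"
  show ?thesis
  proof (cases "a = 1")
    case True then show ?thesis using A4 arr_def by (simp add: add.commute)
  next
    case False
    have 1: "arr (a+ell) (a-1)" using A3[of "a+ell"] h False arr_def by auto
    have 2: "arr (a-1) a" using A2[of a] h False ellN arr_def by auto
    have 3: "sc (a+ell) a" using sc_iff h ell3 by auto
    have r: "a + ell \<in> {1..N}" "a - 1 \<in> {1..N}" "a \<in> {1..N}" using h False by auto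
    show ?thesis using arr_trans[OF r 1 2] 3 by auto
  qed
qed

lemma cellchain2: "1 \<le> a \<Longrightarrow> a < b \<Longrightarrow> b \<le> N \<Longrightarrow> a mod ell = b mod ell \<Longrightarrow> arr b a"
proof -
  assume h: "1 \<le> a" "a < b" "b \<le> N" "a mod ell = b mod ell"
  then have "ell dvd (b - a)" by (metis less_imp_le mod_eq_dvd_iff_nat)
  then obtain k where k: "b - a = ell * k" by auto
  have kpos: "k \<noteq> 0"
  proof
    assume "k = 0" with k have "b - a = 0" by simp
    with h show False by simp
  qed
  have "\<forall>j. 1 \<le> j \<longrightarrow> a + ell * j \<le> N \<longrightarrow> arr (a + ell * j) a"
  proof (intro allI)
    fix j show "1 \<le> j \<longrightarrow> a + ell * j \<le> N \<longrightarrow> arr (a + ell * j) a"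
    proof (induction j)
      case 0 then show ?case by simp
    next
      case (Suc j)
      show ?case
      proof (intro impI)
        assume s: "1 \<le> Suc j" "a + ell * Suc j \<le> N"
        show "arr (a + ell * Suc j) a"
        proof (cases "j = 0")
          case True then show ?thesis using cellchain h s by simp
        next
          case False
          have i1: "arr (a + ell * j) a" using Suc.IH False s by simp
          have i2: "arr (a + ell * j + ell) (a + ell * j)" using cellchain[of "a + ell*j"] h s by simp
          have i3: "sc (a + ell * j) a" using sc_iff h s by (simp add: mult.commute)
          have "arr (a + ell * j + ell) a"
            using arr_trans[OF _ _ _ i2 i1] i3 h s by auto
          then show ?thesis by (simp add: algebra_simps)
        qed
      qed
    qed
  qed
  then show ?thesis using k kpos h by (metis le_add_diff_inverse less_imp_le less_one not_less)
qed

lemma F2: "a \<in> {1..N} \<Longrightarrow> b \<in> {1..N} \<Longrightarrow> arr a b \<Longrightarrow> a mod ell = b mod ell \<Longrightarrow> b < a"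
  using cellchain2[of a b] arr_asym[of a b] by (metis atLeastAtMost_iff linorder_neqE_nat)

lemma Snb: "a \<in> {1..N} \<Longrightarrow> b \<in> {1..N} \<Longrightarrow> \<not> sc a b \<Longrightarrow> col a = col b \<or> row a = row b
   \<Longrightarrow> a mod ell = (b+1) mod ell \<or> (a+1) mod ell = b mod ell"
proof (rule ccontr)
  assume h: "a \<in> {1..N}" "b \<in> {1..N}" "\<not> sc a b" "col a = col b \<or> row a = row b"
    and nh: "\<not> (a mod ell = (b+1) mod ell \<or> (a+1) mod ell = b mod ell)"
  define y where "y = (a + ell - 1) mod ell + 1"
  define z where "z = (a + ell - 2) mod ell + 1"
  have ell0: "0 < ell" using ell3 by simp
  have yr: "y \<in> {1..ell}" using y_def mod_less_divisor[OF ell0, of "a+ell-1"] by auto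
  have zr: "z \<in> {1..ell}" using z_def mod_less_divisor[OF ell0, of "a+ell-2"] by auto
  have ym: "y mod ell = a mod ell"
  proof -
    have "((a+ell-1) mod ell + 1) mod ell = ((a+ell-1) + 1) mod ell" by (rule mod_add_left_eq)
    then have "y mod ell = ((a+ell-1) + 1) mod ell" unfolding y_def .
    also have "(a+ell-1)+1 = a + ell" using h(1) by auto
    finally show ?thesis by simp
  qed
  have zm: "(z+1) mod ell = a mod ell"
  proof -
    have "((a+ell-2) mod ell + 2) mod ell = ((a+ell-2) + 2) mod ell" by (rule mod_add_left_eq)
    moreover have "z + 1 = (a+ell-2) mod ell + 2" unfolding z_def by simp
    ultimately have "(z+1) mod ell = ((a+ell-2) + 2) mod ell" by simp
    also have "(a+ell-2)+2 = a + ell" using ell3 by auto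
    finally show ?thesis by simp
  qed
  let ?nx = "y+1"
  let ?pv = "z"
  have Nr: "y \<in> {1..N}" "y+1 \<in> {1..N}" "z \<in> {1..N}" "z+1 \<in> {1..N}" using yr zr ellN by auto
  have a1: "arr y (y+1)" using A2[of "y+1"] Nr arr_def by auto
  have a2: "arr z (z+1)" using A2[of "z+1"] Nr arr_def by auto
  have scy: "sc y a" using sc_iff Nr h ym by auto
  have scz: "sc (z+1) a" using sc_iff Nr h zm by auto
  have nx: "(y+1) mod ell = (a+1) mod ell" using mod_add_cong1[OF ym] .
  have n1: "\<not> sc a (y+1)" using sc_iff Nr h nx mod_nek[of 1 ell a] ell3 by auto
  have n2: "\<not> sc a z"
  proof
    assume "sc a z" then have "a mod ell = z mod ell" using sc_iff Nr h by auto
    then have "z mod ell = (z+1) mod ell" using zm by simp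
    then show False using mod_nek[of 1 ell z] ell3 by auto
  qed
  have n3: "\<not> sc (y+1) z"
  proof
    assume "sc (y+1) z" then have "(a+1) mod ell = z mod ell" using sc_iff Nr nx by auto
    then have "(a+1+1) mod ell = (z + 1) mod ell" by (rule mod_add_cong1)
    then have "a mod ell = (a+2) mod ell" using zm by (simp add: add.assoc)
    then show False using mod_nek[of 2 ell a] ell3 by auto
  qed
  have n4: "\<not> sc b (y+1)" using sc_iff Nr h nx nh by auto
  have n5: "\<not> sc b z"
  proof
    assume "sc b z" then have "b mod ell = z mod ell" using sc_iff Nr h by auto
    then have "(b+1) mod ell = (z+1) mod ell" by (rule mod_add_cong1)
    then show False using zm nh by simp
  qed
  have l1: "col a = col (y+1) \<or> row a = row (y+1)"
    using a1 scy unfolding arr_def sc_def using AC_col AR_row by metis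
  have l2: "col a = col z \<or> row a = row z"
    using a2 scz unfolding arr_def sc_def using AC_col AR_row by metis
  have tc: "\<And>x y z. x \<in> {1..N} \<Longrightarrow> y \<in> {1..N} \<Longrightarrow> z \<in> {1..N} \<Longrightarrow> col x = col y \<Longrightarrow> col x = col z
     \<Longrightarrow> \<not> sc x y \<Longrightarrow> \<not> sc y z \<Longrightarrow> \<not> sc x z \<Longrightarrow> False"
  proof -
    fix x y z assume a: "x \<in> {1..N}" "y \<in> {1..N}" "z \<in> {1..N}" "col x = col y" "col x = col z"
      "\<not> sc x y" "\<not> sc y z" "\<not> sc x z"
    then have "row x \<noteq> row y" "row y \<noteq> row z" "row x \<noteq> row z" unfolding sc_def by auto
    then show False using deg_col[OF a(1,2,3)] a(4,5) by simp
  qed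
  have tr: "\<And>x y z. x \<in> {1..N} \<Longrightarrow> y \<in> {1..N} \<Longrightarrow> z \<in> {1..N} \<Longrightarrow> row x = row y \<Longrightarrow> row x = row z
     \<Longrightarrow> \<not> sc x y \<Longrightarrow> \<not> sc y z \<Longrightarrow> \<not> sc x z \<Longrightarrow> False"
  proof -
    fix x y z assume a: "x \<in> {1..N}" "y \<in> {1..N}" "z \<in> {1..N}" "row x = row y" "row x = row z"
      "\<not> sc x y" "\<not> sc y z" "\<not> sc x z"
    then have "col x \<noteq> col y" "col y \<noteq> col z" "col x \<noteq> col z" unfolding sc_def by auto
    then show False using deg_row[OF a(1,2,3)] a(4,5) by simp
  qed
  have scs: "\<And>x y. sc x y \<Longrightarrow> sc y x" unfolding sc_def by auto
  have n4': "\<not> sc b z" using n5 .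
  show False
  proof (cases "col a = col b")
    case cb: True
    have "\<not> col a = col (y+1)" using tc[OF h(1) h(2) Nr(2) cb] h(3) n4 n1 scs by blast
    then have rn: "row a = row (y+1)" using l1 by blast
    have "\<not> col a = col z" using tc[OF h(1) h(2) Nr(3) cb] h(3) n5 n2 scs by blast
    then have rp: "row a = row z" using l2 by blast
    show False using tr[OF h(1) Nr(2) Nr(3) rn rp] n1 n3 n2 by blast
  next
    case False
    then have rb: "row a = row b" using h(4) by blast
    have "\<not> row a = row (y+1)" using tr[OF h(1) h(2) Nr(2) rb] h(3) n4 n1 scs by blast
    then have cn: "col a = col (y+1)" using l1 by blast
    have "\<not> row a = row z" using tr[OF h(1) h(2) Nr(3) rb] h(3) n5 n2 scs by blast
    then have cp: "col a = col z" using l2 by blast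
    show False using tc[OF h(1) Nr(2) Nr(3) cn cp] n1 n3 n2 by blast
  qed
qed


lemma F3: "a \<in> {1..N} \<Longrightarrow> b \<in> {1..N} \<Longrightarrow> arr a b \<Longrightarrow> (b+1) mod ell = a mod ell \<Longrightarrow> b + ell + 1 \<le> a"
proof (rule ccontr)
  assume h: "a \<in> {1..N}" "b \<in> {1..N}" "arr a b" "(b+1) mod ell = a mod ell" and nc: "\<not> b + ell + 1 \<le> a"
  have ell0: "0 < ell" using ell3 by simp
  have ge: "a \<le> b + 1"
  proof (rule ccontr)
    assume "\<not> a \<le> b + 1"
    then have "b + 1 + ell \<le> a" using modge[of "b+1" a ell] h ell0 by simp
    with nc show False by simp
  qed
  have "arr b a"
  proof (cases "a = b + 1")
    case True then show ?thesis using A2[of a] h arr_def by auto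
  next
    case False
    then have lt: "a < b + 1" using ge by simp
    then have big: "a + ell \<le> b + 1" using modge[of a "b+1" ell] h ell0 by simp
    show ?thesis
    proof (cases "b < N")
      case True
      have r: "b+1 \<in> {1..N}" using True by auto
      have 1: "arr b (b+1)" using A2[of "b+1"] True h arr_def by auto
      have 2: "arr (b+1) a" using cellchain2[of a "b+1"] h lt True by auto
      have 3: "sc (b+1) a" using sc_iff r h by auto
      show ?thesis using arr_trans[OF h(2) r h(1) 1 2] 3 by auto
    next
      case False
      then have bN: "b = N" using h by auto
      have r: "N - ell \<in> {1..N}" "N - ell + 1 \<in> {1..N}" using ellN ell0 by auto
      have 1: "arr N (N - ell)" using cellchain[of "N - ell"] ellN by auto
      have 2: "arr (N - ell) (N - ell + 1)" using A2[of "N - ell + 1"] ellN ell0 arr_def by auto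
      have e: "N mod ell = (N - ell) mod ell" using ellN by (intro le_mod_geq) simp
      have Nr0: "N \<in> {1..N}" using ellN by auto
      have s12: "sc N (N - ell)" using sc_iff[OF Nr0 r(1)] e by blast
      have Nr: "N \<in> {1..N}" using ellN by auto
      have 12: "arr N (N - ell + 1)" using arr_trans[OF Nr r(1) r(2) 1 2] s12 by auto
      have m: "(N - ell + 1) mod ell = a mod ell"
      proof -
        have "N - ell + 1 = (N + 1) - ell" using ellN by simp
        moreover have "(N+1) mod ell = (N + 1 - ell) mod ell" using ellN by (intro le_mod_geq) simp
        ultimately have "(N - ell + 1) mod ell = (N+1) mod ell" by simp
        then show ?thesis using h(4) bN by simp
      qed
      have ag: "a \<le> N - ell + 1" using big bN by simp
      show ?thesis
      proof (cases "a = N - ell + 1")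
        case True then show ?thesis using 12 bN by simp
      next
        case False
        have 3: "arr (N - ell + 1) a" using cellchain2[of a "N - ell + 1"] h ag False m ell0 by auto
        have 4: "sc (N - ell + 1) a" using sc_iff r h m by auto
        show ?thesis using arr_trans[OF Nr r(2) h(1) 12 3] 4 bN by auto
      qed
    qed
  qed
  then show False using arr_asym h by blast
qed

lemma F1: "a \<in> {1..N} \<Longrightarrow> b \<in> {1..N} \<Longrightarrow> arr a b \<Longrightarrow> b \<le> a + 1"
proof -
  assume h: "a \<in> {1..N}" "b \<in> {1..N}" "arr a b"
  have ell0: "0 < ell" using ell3 by simp
  show ?thesis
  proof (cases "sc a b")
    case True then show ?thesis using F2 h sc_iff by fastforce
  next
    case False
    have "col a = col b \<or> row a = row b" using h(3) AC_col AR_row arr_def by metis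
    then have "a mod ell = (b+1) mod ell \<or> (a+1) mod ell = b mod ell" using Snb h False by blast
    then show ?thesis
    proof
      assume "a mod ell = (b+1) mod ell" then show ?thesis using F3 h by fastforce
    next
      assume m: "(a+1) mod ell = b mod ell"
      show ?thesis
      proof (rule ccontr)
        assume "\<not> b \<le> a + 1"
        then have big: "a + 1 + ell \<le> b" using modge[of "a+1" b ell] m ell0 by simp
        let ?j = "b - ell - 1"
        have r: "?j \<in> {1..N}" using big h by auto
        have 1: "arr b ?j" using A3[of b] big h arr_def by auto
        have mj: "?j mod ell = a mod ell"
        proof -
          have eq: "?j + 1 + ell = b" using big by simp
          have "(?j + 1) mod ell = b mod ell" by (metis eq mod_add_self2)
          then have "(?j + 1) mod ell = (a + 1) mod ell" using m by simp
          then show ?thesis using mod_suc_cancel ell0 by blast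
        qed
        have "arr b a"
        proof (cases "?j = a")
          case True then show ?thesis using 1 by simp
        next
          case False
          then have "a < ?j" using big by auto
          then have 2: "arr ?j a" using cellchain2[of a ?j] h r mj by auto
          have 3: "sc ?j a" using sc_iff r h mj by auto
          show ?thesis using arr_trans[OF h(2) r h(1) 1 2] 3 by auto
        qed
        then show False using arr_asym h by blast
      qed
    qed
  qed
qed

lemma main_abs:
  fixes m :: nat and g :: "nat \<Rightarrow> nat"
  assumes mell: "ell < m"
    and grange: "\<And>t. t \<in> {1..m} \<Longrightarrow> g t \<in> {1..N}"
    and gcong: "\<And>s t. s \<in> {1..m} \<Longrightarrow> t \<in> {1..m} \<Longrightarrow> s mod ell = t mod ell \<Longrightarrow> g s mod ell = g t mod ell"
    and B2: "\<And>t. 2 \<le> t \<Longrightarrow> t \<le> m \<Longrightarrow> arr (g (t-1)) (g t)"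
    and B3: "\<And>t. ell + 1 < t \<Longrightarrow> t \<le> m \<Longrightarrow> arr (g t) (g (t-ell-1))"
    and B4: "arr (g (ell+1)) (g 1)"
  shows "\<And>t. t \<in> {1..m} \<Longrightarrow> g t + 1 = g 1 + t"
proof -
  have ell0: "0 < ell" using ell3 by simp
  have step: "\<And>t. 2 \<le> t \<Longrightarrow> t \<le> m \<Longrightarrow> g t \<le> g (t-1) + 1"
  proof -
    fix t assume t: "2 \<le> t" "t \<le> m"
    then have r: "t - 1 \<in> {1..m}" "t \<in> {1..m}" by auto
    show "g t \<le> g (t-1) + 1" using F1[OF grange[OF r(1)] grange[OF r(2)] B2[OF t]] .
  qed
  have bound: "\<And>s d. 1 \<le> s \<Longrightarrow> s + d \<le> m \<Longrightarrow> g (s + d) \<le> g s + d"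
  proof -
    fix s d show "1 \<le> s \<Longrightarrow> s + d \<le> m \<Longrightarrow> g (s + d) \<le> g s + d"
    proof (induction d)
      case 0 then show ?case by simp
    next
      case (Suc d)
      have "g (s + Suc d) \<le> g (s + d) + 1" using step[of "s + Suc d"] Suc.prems by simp
      then show ?case using Suc by simp
    qed
  qed
  have r1: "1 \<in> {1..m}" "ell + 1 \<in> {1..m}" using mell by auto
  have first: "g 1 + ell \<le> g (ell+1)"
  proof -
    have m1: "(ell+1) mod ell = 1 mod ell" by (rule mod_add_self1)
    have c: "g (ell+1) mod ell = g 1 mod ell" by (rule gcong[OF r1(2) r1(1) m1])
    have "g 1 < g (ell+1)" using F2[OF grange[OF r1(2)] grange[OF r1(1)] B4] c by simp
    then show ?thesis using modge c ell0 by simp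
  qed
  have lowpart: "\<And>t. t \<in> {1..ell+1} \<Longrightarrow> g t + 1 = g 1 + t"
  proof -
    fix t assume t: "t \<in> {1..ell+1}"
    have u1: "g t \<le> g 1 + (t - 1)" using bound[of 1 "t-1"] t mell by auto
    have u2: "g (t + (ell + 1 - t)) \<le> g t + (ell + 1 - t)" using bound[of t "ell+1-t"] t mell by auto
    then have "g (ell+1) \<le> g t + (ell + 1 - t)" using t by simp
    with first u1 t show "g t + 1 = g 1 + t" by auto
  qed
  show "\<And>t. t \<in> {1..m} \<Longrightarrow> g t + 1 = g 1 + t"
  proof -
    fix t0 show "t0 \<in> {1..m} \<Longrightarrow> g t0 + 1 = g 1 + t0"
    proof (induction t0 rule: less_induct)
      case (less t)
      show ?case
      proof (cases "t \<le> ell + 1")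
        case True then show ?thesis using lowpart less.prems by auto
      next
        case False
        have tr: "t \<in> {1..m}" "t - ell \<in> {1..m}" "t - ell - 1 \<in> {1..m}" "t - 1 \<in> {1..m}" using less.prems False by auto
        have e1: "g (t - ell) + 1 = g 1 + (t - ell)" using less.IH[of "t-ell"] tr ell0 by auto
        have e2: "g (t - ell - 1) + 1 = g 1 + (t - ell - 1)" using less.IH[of "t-ell-1"] tr ell0 by auto
        have e3: "g (t - 1) + 1 = g 1 + (t - 1)" using less.IH[of "t-1"] tr by auto
        have cm: "g t mod ell = g (t - ell) mod ell"
        proof -
          have "t mod ell = (t - ell) mod ell" using False by (intro le_mod_geq) simp
          then show ?thesis using gcong[OF tr(1) tr(2)] by blast
        qed
        have "(g (t - ell - 1) + 1) mod ell = g t mod ell"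
        proof -
          have "g (t - ell - 1) + 1 = g (t - ell)" using e1 e2 False by auto
          then show ?thesis using cm by simp
        qed
        then have "g (t - ell - 1) + ell + 1 \<le> g t"
          using F3[OF grange[OF tr(1)] grange[OF tr(3)] B3[of t]] False tr by auto
        moreover have "g t \<le> g (t-1) + 1" using step[of t] tr False by auto
        ultimately show ?thesis using e2 e3 False by auto
      qed
    qed
  qed
qed

end


lemma the_cycle_ws: "unicyclic M p q \<Longrightarrow> \<exists>ws. is_cycle (rc_edges M p q) ws \<and> the_cycle M p q = cycle_edges ws"
proof -
  assume "unicyclic M p q"
  then have "the_cycle M p q \<in> cycles_of (rc_edges M p q)"
    unfolding unicyclic_def the_cycle_def by (rule theI')
  then show ?thesis unfolding cycles_of_def by auto
qed

lemma cycle_cells_sub: "unicyclic M p q \<Longrightarrow> (i,j) \<in> cycle_cells M p q \<Longrightarrow> i \<in> {1..p} \<and> j \<in> {1..q} \<and> M i j \<noteq> 0"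
proof -
  assume u: "unicyclic M p q" and ij: "(i,j) \<in> cycle_cells M p q"
  obtain ws where ws: "is_cycle (rc_edges M p q) ws" "the_cycle M p q = cycle_edges ws" using the_cycle_ws[OF u] by blast
  have "{Inl i, Inr j} \<in> cycle_edges ws" using ij ws unfolding cycle_cells_def by auto
  then have "{Inl i, Inr j} \<in> rc_edges M p q" using ws(1) unfolding cycle_edges_def is_cycle_def by auto
  then show ?thesis unfolding rc_edges_def by (auto simp: doubleton_eq_iff)
qed

lemma suc_mod_inj: "k < (L::nat) \<Longrightarrow> k' < L \<Longrightarrow> Suc k mod L = Suc k' mod L \<Longrightarrow> k = k'"
  using mod_suc_cancel[of L k k'] by simp

lemma ell_ge3: "unicyclic M p q \<Longrightarrow> 3 \<le> cycle_len M p q"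
proof -
  assume u: "unicyclic M p q"
  obtain ws where ws: "is_cycle (rc_edges M p q) ws" "the_cycle M p q = cycle_edges ws" using the_cycle_ws[OF u] by blast
  let ?L = "length ws"
  have d: "distinct ws" and L3: "3 \<le> ?L" using ws(1) unfolding is_cycle_def by auto
  have fin: "finite (cycle_edges ws)"
  proof -
    have "cycle_edges ws = (\<lambda>k. {ws ! k, ws ! (Suc k mod ?L)}) ` {..<?L}" unfolding cycle_edges_def by auto
    then show ?thesis by simp
  qed
  let ?e0 = "{ws ! 0, ws ! (Suc 0 mod ?L)}"
  let ?e1 = "{ws ! 1, ws ! (Suc 1 mod ?L)}"
  let ?e2 = "{ws ! 2, ws ! (Suc 2 mod ?L)}"
  have sub: "{?e0, ?e1, ?e2} \<subseteq> cycle_edges ws" using L3 unfolding cycle_edges_def by force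
  have m1: "Suc 0 mod ?L = 1" "Suc 1 mod ?L = 2" using L3 by auto
  have m3: "Suc 2 mod ?L \<noteq> 1" "Suc 2 mod ?L < ?L"
  proof -
    show "Suc 2 mod ?L < ?L" using L3 by (intro mod_less_divisor) auto
    show "Suc 2 mod ?L \<noteq> 1"
    proof (cases "?L = 3")
      case True then show ?thesis by simp
    next
      case False then have "Suc 2 < ?L" using L3 by simp
      then show ?thesis by simp
    qed
  qed
  have ne: "ws ! 0 \<noteq> ws ! 1" "ws ! 0 \<noteq> ws ! 2" "ws ! 1 \<noteq> ws ! 2" "ws ! 1 \<noteq> ws ! (Suc 2 mod ?L)"
  proof -
    have A: "\<And>a b. a < ?L \<Longrightarrow> b < ?L \<Longrightarrow> a \<noteq> b \<Longrightarrow> ws ! a \<noteq> ws ! b" using d nth_eq_iff_index_eq by blast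
    have nn: "ws \<noteq> []" using L3 by auto
    show "ws ! 0 \<noteq> ws ! 1" using A[of 0 1] L3 nn by auto
    show "ws ! 0 \<noteq> ws ! 2" using A[of 0 2] L3 nn by auto
    show "ws ! 1 \<noteq> ws ! 2" using A[of 1 2] L3 nn by auto
    show "ws ! 1 \<noteq> ws ! (Suc 2 mod ?L)" using A[of 1 "Suc 2 mod ?L"] L3 nn m3 by auto
  qed
  have "?e0 \<noteq> ?e1" "?e1 \<noteq> ?e2" "?e0 \<noteq> ?e2" using ne m1 by (auto simp: doubleton_eq_iff)
  then have "card {?e0, ?e1, ?e2} = 3" by simp
  then have "3 \<le> card (cycle_edges ws)" using card_mono[OF fin sub] by simp
  then show ?thesis unfolding cycle_len_def ws(2) .
qed

lemma deg2: "distinct ws \<Longrightarrow> e1 \<in> cycle_edges ws \<Longrightarrow> e2 \<in> cycle_edges ws \<Longrightarrow> e3 \<in> cycle_edges ws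
  \<Longrightarrow> x \<in> e1 \<Longrightarrow> x \<in> e2 \<Longrightarrow> x \<in> e3 \<Longrightarrow> e1 = e2 \<or> e1 = e3 \<or> e2 = e3"
proof -
  assume d: "distinct ws" and e: "e1 \<in> cycle_edges ws" "e2 \<in> cycle_edges ws" "e3 \<in> cycle_edges ws"
    and x: "x \<in> e1" "x \<in> e2" "x \<in> e3"
  let ?L = "length ws"
  obtain k1 k2 k3 where k: "k1 < ?L" "k2 < ?L" "k3 < ?L"
    "e1 = {ws ! k1, ws ! (Suc k1 mod ?L)}" "e2 = {ws ! k2, ws ! (Suc k2 mod ?L)}" "e3 = {ws ! k3, ws ! (Suc k3 mod ?L)}"
    using e unfolding cycle_edges_def by auto
  have L0: "0 < ?L" using k by auto
  have A: "\<And>a b. a < ?L \<Longrightarrow> b < ?L \<Longrightarrow> ws ! a = ws ! b \<Longrightarrow> a = b" using d nth_eq_iff_index_eq by blast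
  have B: "\<And>a b. a < ?L \<Longrightarrow> b < ?L \<Longrightarrow> ws ! (Suc a mod ?L) = ws ! (Suc b mod ?L) \<Longrightarrow> a = b"
    using A suc_mod_inj L0 by (meson mod_less_divisor)
  define P where "P k \<longleftrightarrow> ws ! k = x" for k
  define Q where "Q k \<longleftrightarrow> ws ! (Suc k mod ?L) = x" for k
  have t: "P k1 \<or> Q k1" "P k2 \<or> Q k2" "P k3 \<or> Q k3" using x k unfolding P_def Q_def by auto
  have PP: "\<And>a b. a < ?L \<Longrightarrow> b < ?L \<Longrightarrow> P a \<Longrightarrow> P b \<Longrightarrow> a = b" using A unfolding P_def by metis
  have QQ: "\<And>a b. a < ?L \<Longrightarrow> b < ?L \<Longrightarrow> Q a \<Longrightarrow> Q b \<Longrightarrow> a = b" using B unfolding Q_def by metis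
  have "k1 = k2 \<or> k1 = k3 \<or> k2 = k3" using t PP QQ k(1,2,3) by blast
  then show ?thesis using k by auto
qed

lemma deg_col_cells: "unicyclic M p q \<Longrightarrow> (i,j1) \<in> cycle_cells M p q \<Longrightarrow> (i,j2) \<in> cycle_cells M p q \<Longrightarrow> (i,j3) \<in> cycle_cells M p q
  \<Longrightarrow> j1 \<noteq> j2 \<Longrightarrow> j2 \<noteq> j3 \<Longrightarrow> j1 \<noteq> j3 \<Longrightarrow> False"
proof -
  assume u: "unicyclic M p q" and c: "(i,j1) \<in> cycle_cells M p q" "(i,j2) \<in> cycle_cells M p q" "(i,j3) \<in> cycle_cells M p q"
    and n: "j1 \<noteq> j2" "j2 \<noteq> j3" "j1 \<noteq> j3"
  obtain ws where ws: "is_cycle (rc_edges M p q) ws" "the_cycle M p q = cycle_edges ws" using the_cycle_ws[OF u] by blast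
  have d: "distinct ws" using ws(1) unfolding is_cycle_def by auto
  have e: "{Inl i, Inr j1} \<in> cycle_edges ws" "{Inl i, Inr j2} \<in> cycle_edges ws" "{Inl i, Inr j3} \<in> cycle_edges ws"
    using c ws(2) unfolding cycle_cells_def by auto
  from deg2[OF d e, of "Inl i"] n show False by (auto simp: doubleton_eq_iff)
qed

lemma deg_row_cells: "unicyclic M p q \<Longrightarrow> (i1,j) \<in> cycle_cells M p q \<Longrightarrow> (i2,j) \<in> cycle_cells M p q \<Longrightarrow> (i3,j) \<in> cycle_cells M p q
  \<Longrightarrow> i1 \<noteq> i2 \<Longrightarrow> i2 \<noteq> i3 \<Longrightarrow> i1 \<noteq> i3 \<Longrightarrow> False"
proof -
  assume u: "unicyclic M p q" and c: "(i1,j) \<in> cycle_cells M p q" "(i2,j) \<in> cycle_cells M p q" "(i3,j) \<in> cycle_cells M p q"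
    and n: "i1 \<noteq> i2" "i2 \<noteq> i3" "i1 \<noteq> i3"
  obtain ws where ws: "is_cycle (rc_edges M p q) ws" "the_cycle M p q = cycle_edges ws" using the_cycle_ws[OF u] by blast
  have d: "distinct ws" using ws(1) unfolding is_cycle_def by auto
  have e: "{Inl i1, Inr j} \<in> cycle_edges ws" "{Inl i2, Inr j} \<in> cycle_edges ws" "{Inl i3, Inr j} \<in> cycle_edges ws"
    using c ws(2) unfolding cycle_cells_def by auto
  from deg2[OF d e, of "Inr j"] n show False by (auto simp: doubleton_eq_iff)
qed

lemma vmono: "\<forall>k<p. (v::nat\<Rightarrow>real) k \<le> v (Suc k) \<Longrightarrow> a \<le> b \<Longrightarrow> b \<le> p \<Longrightarrow> v a \<le> v b"
proof (induction b)
  case 0 then show ?case by simp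
next
  case (Suc b)
  show ?case
  proof (cases "a = Suc b")
    case True then show ?thesis by simp
  next
    case False
    then have "v a \<le> v b" using Suc by simp
    also have "v b \<le> v (Suc b)" using Suc.prems by simp
    finally show ?thesis .
  qed
qed

lemma strip_unique: "\<forall>k<p. (v::nat\<Rightarrow>real) k \<le> v (Suc k) \<Longrightarrow> i \<in> {1..p} \<Longrightarrow> i' \<in> {1..p}
  \<Longrightarrow> v (i-1) < x \<Longrightarrow> x < v i \<Longrightarrow> v (i'-1) < x \<Longrightarrow> x < v i' \<Longrightarrow> i = i'"
proof (rule ccontr)
  assume m: "\<forall>k<p. v k \<le> v (Suc k)" and r: "i \<in> {1..p}" "i' \<in> {1..p}"
    and x: "v (i-1) < x" "x < v i" "v (i'-1) < x" "x < v i'" and ne: "i \<noteq> i'"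
  show False
  proof (cases "i < i'")
    case True
    then have "v i \<le> v (i'-1)" using vmono[OF m, of i "i'-1"] r by auto
    then show False using x by auto
  next
    case False
    then have "v i' \<le> v (i-1)" using vmono[OF m, of i' "i-1"] r ne by auto
    then show False using x by auto
  qed
qed



locale gcoil =
  fixes M :: "nat \<Rightarrow> nat \<Rightarrow> int" and p q :: nat and c r :: "nat \<Rightarrow> int" and N :: nat
    and pi :: "nat \<Rightarrow> nat" and v h :: "nat \<Rightarrow> real" and w :: "nat \<Rightarrow> nat" and lab :: "nat \<times> nat \<Rightarrow> nat"
  assumes pm: "partial_mult_matrix M p q c r" and uc: "unicyclic M p q"
    and gc: "gridded_coil M p q c r N pi v h w lab"
begin

abbreviation "ell \<equiv> cycle_len M p q"
abbreviation "CC \<equiv> cycle_cells M p q"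

lemma gr: "gridded M p q N pi v h" using gc unfolding gridded_coil_def Let_def by auto
lemma ellN: "ell < N" using gc unfolding gridded_coil_def Let_def by auto
lemma wbij: "bij_betw w {1..N} {1..N}" using gc unfolding gridded_coil_def Let_def by auto
lemma labbij: "bij_betw lab CC {1..ell}" using gc unfolding gridded_coil_def Let_def by auto
lemma cellex: "i \<in> {1..N} \<Longrightarrow> \<exists>ij\<in>CC. in_cell v h pi (fst ij) (snd ij) (w i) \<and> lab ij = (i - 1) mod ell + 1"
  using gc unfolding gridded_coil_def Let_def by auto
lemma C2: "1 < i \<Longrightarrow> i \<le> N \<Longrightarrow> orient_arrow p q c r v h pi (w (i-1)) (w i)"
  using gc unfolding gridded_coil_def Let_def by auto
lemma C3: "ell + 1 < i \<Longrightarrow> i \<le> N \<Longrightarrow> orient_arrow p q c r v h pi (w i) (w (i - ell - 1))"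
  using gc unfolding gridded_coil_def Let_def by auto
lemma C4: "orient_arrow p q c r v h pi (w (ell+1)) (w 1)"
  using gc unfolding gridded_coil_def Let_def by auto

lemma vm: "\<forall>k<p. v k \<le> v (Suc k)" "\<forall>k<q. h k \<le> h (Suc k)" using gr unfolding gridded_def by auto

lemma wr: "a \<in> {1..N} \<Longrightarrow> w a \<in> {1..N}" using wbij by (meson bij_betwE)

lemma CCsub: "ij \<in> CC \<Longrightarrow> fst ij \<in> {1..p} \<and> snd ij \<in> {1..q} \<and> M (fst ij) (snd ij) \<noteq> 0"
  using cycle_cells_sub[OF uc, of "fst ij" "snd ij"] by simp

lemma cell_uniq: "ij \<in> CC \<Longrightarrow> ij' \<in> CC \<Longrightarrow> in_cell v h pi (fst ij) (snd ij) x
  \<Longrightarrow> in_cell v h pi (fst ij') (snd ij') x \<Longrightarrow> ij = ij'"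
proof -
  assume a: "ij \<in> CC" "ij' \<in> CC" "in_cell v h pi (fst ij) (snd ij) x" "in_cell v h pi (fst ij') (snd ij') x"
  have "fst ij = fst ij'"
    using strip_unique[OF vm(1), of "fst ij" "fst ij'" "real x"] CCsub[OF a(1)] CCsub[OF a(2)] a(3,4)
    unfolding in_cell_def by blast
  moreover have "snd ij = snd ij'"
    using strip_unique[OF vm(2), of "snd ij" "snd ij'" "real (pi x)"] CCsub[OF a(1)] CCsub[OF a(2)] a(3,4)
    unfolding in_cell_def by blast
  ultimately show ?thesis by (simp add: prod_eq_iff)
qed

definition cellof where "cellof a = (SOME ij. ij \<in> CC \<and> in_cell v h pi (fst ij) (snd ij) (w a))"

lemma cellof: "a \<in> {1..N} \<Longrightarrow> cellof a \<in> CC \<and> in_cell v h pi (fst (cellof a)) (snd (cellof a)) (w a)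
   \<and> lab (cellof a) = (a - 1) mod ell + 1"
proof -
  assume a: "a \<in> {1..N}"
  obtain ij where ij: "ij \<in> CC" "in_cell v h pi (fst ij) (snd ij) (w a)" "lab ij = (a - 1) mod ell + 1"
    using cellex[OF a] by blast
  have s: "cellof a \<in> CC \<and> in_cell v h pi (fst (cellof a)) (snd (cellof a)) (w a)"
    using someI[of "\<lambda>ij. ij \<in> CC \<and> in_cell v h pi (fst ij) (snd ij) (w a)" ij] ij unfolding cellof_def by blast
  then have "cellof a = ij" using cell_uniq ij by blast
  then show ?thesis using s ij by simp
qed

lemma cellof_uniq: "a \<in> {1..N} \<Longrightarrow> ij \<in> CC \<Longrightarrow> in_cell v h pi (fst ij) (snd ij) (w a) \<Longrightarrow> cellof a = ij"
  using cellof cell_uniq by blast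

lemma cellof_eq_iff: "a \<in> {1..N} \<Longrightarrow> b \<in> {1..N} \<Longrightarrow> cellof a = cellof b \<longleftrightarrow> a mod ell = b mod ell"
proof -
  assume a: "a \<in> {1..N}" and b: "b \<in> {1..N}"
  have e0: "0 < ell" using ell_ge3[OF uc] by simp
  have ea: "a = (a - 1) + 1" and eb: "b = (b - 1) + 1" using a b by auto
  have "cellof a = cellof b \<longleftrightarrow> lab (cellof a) = lab (cellof b)"
    using labbij cellof[OF a] cellof[OF b] unfolding bij_betw_def inj_on_def by metis
  also have "\<dots> \<longleftrightarrow> (a - 1) mod ell = (b - 1) mod ell" using cellof[OF a] cellof[OF b] by simp
  also have "\<dots> \<longleftrightarrow> a mod ell = b mod ell"
  proof
    assume "(a - 1) mod ell = (b - 1) mod ell"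
    then have "(a - 1 + 1) mod ell = (b - 1 + 1) mod ell" by (rule mod_add_cong1)
    then show "a mod ell = b mod ell" using ea eb by simp
  next
    assume "a mod ell = b mod ell"
    then have "(a - 1 + 1) mod ell = (b - 1 + 1) mod ell" using ea eb by simp
    then show "(a - 1) mod ell = (b - 1) mod ell" using mod_suc_cancel e0 by blast
  qed
  finally show ?thesis .
qed

definition colof where "colof a = fst (cellof a)"
definition rowof where "rowof a = snd (cellof a)"
definition ACc where "ACc a b \<longleftrightarrow> colof a = colof b \<and> ((c (colof a) = 1 \<and> w a < w b) \<or> (c (colof a) = -1 \<and> w b < w a))"
definition ARc where "ARc a b \<longleftrightarrow> rowof a = rowof b \<and> ((r (rowof a) = 1 \<and> pi (w a) < pi (w b)) \<or> (r (rowof a) = -1 \<and> pi (w b) < pi (w a)))"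

lemma arrow_to: "a \<in> {1..N} \<Longrightarrow> b \<in> {1..N} \<Longrightarrow> orient_arrow p q c r v h pi (w a) (w b) \<Longrightarrow> ACc a b \<or> ARc a b"
proof -
  assume a: "a \<in> {1..N}" and b: "b \<in> {1..N}" and o: "orient_arrow p q c r v h pi (w a) (w b)"
  have ca: "colof a \<in> {1..p}" "rowof a \<in> {1..q}" "in_cell v h pi (colof a) (rowof a) (w a)"
    using cellof[OF a] CCsub colof_def rowof_def by auto
  have cb: "colof b \<in> {1..p}" "rowof b \<in> {1..q}" "in_cell v h pi (colof b) (rowof b) (w b)"
    using cellof[OF b] CCsub colof_def rowof_def by auto
  show ?thesis
  proof (cases "\<exists>i\<in>{1..p}. v (i - 1) < real (w a) \<and> real (w a) < v i \<and> v (i - 1) < real (w b) \<and> real (w b) < v i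
        \<and> ((c i = 1 \<and> w a < w b) \<or> (c i = -1 \<and> w b < w a))")
    case True
    then obtain i where i: "i \<in> {1..p}" "v (i - 1) < real (w a)" "real (w a) < v i" "v (i - 1) < real (w b)" "real (w b) < v i"
        "(c i = 1 \<and> w a < w b) \<or> (c i = -1 \<and> w b < w a)" by blast
    have "i = colof a" using strip_unique[OF vm(1) i(1) ca(1)] i ca(3) unfolding in_cell_def by blast
    moreover have "i = colof b" using strip_unique[OF vm(1) i(1) cb(1)] i cb(3) unfolding in_cell_def by blast
    ultimately have "ACc a b" using i(6) unfolding ACc_def by simp
    then show ?thesis by simp
  next
    case False
    then obtain j where j: "j \<in> {1..q}" "h (j - 1) < real (pi (w a))" "real (pi (w a)) < h j" "h (j - 1) < real (pi (w b))" "real (pi (w b)) < h j"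
        "(r j = 1 \<and> pi (w a) < pi (w b)) \<or> (r j = -1 \<and> pi (w b) < pi (w a))"
      using o unfolding orient_arrow_def by blast
    have "j = rowof a" using strip_unique[OF vm(2) j(1) ca(2)] j ca(3) unfolding in_cell_def by blast
    moreover have "j = rowof b" using strip_unique[OF vm(2) j(1) cb(2)] j cb(3) unfolding in_cell_def by blast
    ultimately have "ARc a b" using j(6) unfolding ARc_def by simp
    then show ?thesis by simp
  qed
qed

lemma consist: "a \<in> {1..N} \<Longrightarrow> b \<in> {1..N} \<Longrightarrow> colof a = colof b \<Longrightarrow> rowof a = rowof b \<Longrightarrow> ACc a b \<longleftrightarrow> ARc a b"
proof -
  assume a: "a \<in> {1..N}" and b: "b \<in> {1..N}" and cc: "colof a = colof b" and rr: "rowof a = rowof b"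
  define i where "i = colof a"
  define j where "j = rowof a"
  have ij: "(i, j) \<in> CC" using cellof[OF a] unfolding i_def j_def colof_def rowof_def by simp
  have ina: "in_cell v h pi i j (w a)" using cellof[OF a] unfolding i_def j_def colof_def rowof_def by simp
  have inb: "in_cell v h pi i j (w b)" using cellof[OF b] cc rr unfolding i_def j_def colof_def rowof_def by simp
  have rg: "i \<in> {1..p}" "j \<in> {1..q}" "M i j \<noteq> 0" using CCsub[OF ij] by auto
  have Mc: "M i j = c i * r j" "c i \<in> {1, -1}" "r j \<in> {1, -1}" using pm rg unfolding partial_mult_matrix_def by auto
  have wa: "w a \<in> {1..N}" "w b \<in> {1..N}" using wr a b by auto
  have pinj: "inj_on pi {1..N}" using gr unfolding gridded_def is_perm_def bij_betw_def by auto
  have mono: "M i j = 1 \<Longrightarrow> (w a < w b \<longleftrightarrow> pi (w a) < pi (w b))"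
  proof -
    assume m: "M i j = 1"
    have inc: "\<And>x y. x \<in> {1..N} \<Longrightarrow> y \<in> {1..N} \<Longrightarrow> in_cell v h pi i j x \<Longrightarrow> in_cell v h pi i j y \<Longrightarrow> x < y \<Longrightarrow> pi x < pi y"
      using gr rg m unfolding gridded_def by blast
    show ?thesis
    proof
      assume "w a < w b" then show "pi (w a) < pi (w b)" using inc wa ina inb by blast
    next
      assume l: "pi (w a) < pi (w b)"
      show "w a < w b"
      proof (rule ccontr)
        assume "\<not> w a < w b"
        then have "w b < w a \<or> w b = w a" by auto
        then show False
        proof
          assume "w b < w a" then have "pi (w b) < pi (w a)" using inc wa ina inb by blast
          then show False using l by simp
        next
          assume "w b = w a" then show False using l by simp
        qed
      qed
    qed
  qed
  have anti: "M i j = -1 \<Longrightarrow> (w a < w b \<longleftrightarrow> pi (w b) < pi (w a))"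
  proof -
    assume m: "M i j = -1"
    have dec: "\<And>x y. x \<in> {1..N} \<Longrightarrow> y \<in> {1..N} \<Longrightarrow> in_cell v h pi i j x \<Longrightarrow> in_cell v h pi i j y \<Longrightarrow> x < y \<Longrightarrow> pi x > pi y"
      using gr rg m unfolding gridded_def by blast
    show ?thesis
    proof
      assume "w a < w b" then show "pi (w b) < pi (w a)" using dec wa ina inb by blast
    next
      assume l: "pi (w b) < pi (w a)"
      show "w a < w b"
      proof (rule ccontr)
        assume "\<not> w a < w b"
        then have "w b < w a \<or> w b = w a" by auto
        then show False
        proof
          assume "w b < w a" then have "pi (w a) < pi (w b)" using dec wa ina inb by blast
          then show False using l by simp
        next
          assume "w b = w a" then show False using l by simp
        qed
      qed
    qed
  qed
  have pne: "w a < w b \<or> w b < w a \<or> w a = w b" by auto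
  have pe: "w a = w b \<Longrightarrow> pi (w a) = pi (w b)" by simp
  have pne2: "w a \<noteq> w b \<Longrightarrow> pi (w a) \<noteq> pi (w b)" using pinj wa unfolding inj_on_def by blast
  have iff1: "w b < w a \<longleftrightarrow> (w a \<noteq> w b \<and> \<not> w a < w b)" by auto
  have iff2: "pi (w b) < pi (w a) \<longleftrightarrow> (pi (w a) \<noteq> pi (w b) \<and> \<not> pi (w a) < pi (w b))" by auto
  show ?thesis
    unfolding ACc_def ARc_def using cc rr Mc mono anti pne2 iff1 iff2
    unfolding i_def[symmetric] j_def[symmetric]
    by (auto simp: algebra_simps)
qed

sublocale acoil N ell colof rowof ACc ARc
proof
  show "3 \<le> ell" using ell_ge3[OF uc] .
  show "ell < N" using ellN .
  show "\<And>a b. a \<in> {1..N} \<Longrightarrow> b \<in> {1..N} \<Longrightarrow> (colof a = colof b \<and> rowof a = rowof b) \<longleftrightarrow> a mod ell = b mod ell"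
    using cellof_eq_iff unfolding colof_def rowof_def by (simp add: prod_eq_iff)
  show "\<And>a b. ACc a b \<Longrightarrow> colof a = colof b" unfolding ACc_def by simp
  show "\<And>a b. ARc a b \<Longrightarrow> rowof a = rowof b" unfolding ARc_def by simp
  show "\<And>a b d. ACc a b \<Longrightarrow> ACc b d \<Longrightarrow> ACc a d" unfolding ACc_def by auto
  show "\<And>a b d. ARc a b \<Longrightarrow> ARc b d \<Longrightarrow> ARc a d" unfolding ARc_def by auto
  show "\<And>a b. ACc a b \<Longrightarrow> \<not> ACc b a" unfolding ACc_def by auto
  show "\<And>a b. ARc a b \<Longrightarrow> \<not> ARc b a" unfolding ARc_def by auto
  show "\<And>a b. a \<in> {1..N} \<Longrightarrow> b \<in> {1..N} \<Longrightarrow> colof a = colof b \<Longrightarrow> rowof a = rowof b \<Longrightarrow> ACc a b \<longleftrightarrow> ARc a b"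
    using consist by blast
  show "\<And>x y z. x \<in> {1..N} \<Longrightarrow> y \<in> {1..N} \<Longrightarrow> z \<in> {1..N} \<Longrightarrow> colof x = colof y \<Longrightarrow> colof y = colof z
      \<Longrightarrow> rowof x \<noteq> rowof y \<Longrightarrow> rowof y \<noteq> rowof z \<Longrightarrow> rowof x \<noteq> rowof z \<Longrightarrow> False"
  proof -
    fix x y z assume a: "x \<in> {1..N}" "y \<in> {1..N}" "z \<in> {1..N}" "colof x = colof y" "colof y = colof z"
      "rowof x \<noteq> rowof y" "rowof y \<noteq> rowof z" "rowof x \<noteq> rowof z"
    have e: "\<And>t. (colof t, rowof t) = cellof t" unfolding colof_def rowof_def by simp
    have "(colof x, rowof x) \<in> CC" "(colof y, rowof y) \<in> CC" "(colof z, rowof z) \<in> CC"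
      using cellof[OF a(1)] cellof[OF a(2)] cellof[OF a(3)] e by simp_all
    then have "(colof x, rowof x) \<in> CC" "(colof x, rowof y) \<in> CC" "(colof x, rowof z) \<in> CC"
      using a(4,5) by simp_all
    then show False using deg_col_cells[OF uc] a(6,7,8) by blast
  qed
  show "\<And>x y z. x \<in> {1..N} \<Longrightarrow> y \<in> {1..N} \<Longrightarrow> z \<in> {1..N} \<Longrightarrow> rowof x = rowof y \<Longrightarrow> rowof y = rowof z
      \<Longrightarrow> colof x \<noteq> colof y \<Longrightarrow> colof y \<noteq> colof z \<Longrightarrow> colof x \<noteq> colof z \<Longrightarrow> False"
  proof -
    fix x y z assume a: "x \<in> {1..N}" "y \<in> {1..N}" "z \<in> {1..N}" "rowof x = rowof y" "rowof y = rowof z"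
      "colof x \<noteq> colof y" "colof y \<noteq> colof z" "colof x \<noteq> colof z"
    have e: "\<And>t. (colof t, rowof t) = cellof t" unfolding colof_def rowof_def by simp
    have "(colof x, rowof x) \<in> CC" "(colof y, rowof y) \<in> CC" "(colof z, rowof z) \<in> CC"
      using cellof[OF a(1)] cellof[OF a(2)] cellof[OF a(3)] e by simp_all
    then have "(colof x, rowof x) \<in> CC" "(colof y, rowof x) \<in> CC" "(colof z, rowof x) \<in> CC"
      using a(4,5) by simp_all
    then show False using deg_row_cells[OF uc] a(6,7,8) by blast
  qed
  show "\<And>i. 2 \<le> i \<Longrightarrow> i \<le> N \<Longrightarrow> ACc (i-1) i \<or> ARc (i-1) i"
  proof -
    fix i :: nat assume i: "2 \<le> i" "i \<le> N"
    then have r: "i - 1 \<in> {1..N}" "i \<in> {1..N}" by auto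
    show "ACc (i-1) i \<or> ARc (i-1) i" using arrow_to[OF r C2] i by simp
  qed
  show "\<And>i. ell + 1 < i \<Longrightarrow> i \<le> N \<Longrightarrow> ACc i (i-ell-1) \<or> ARc i (i-ell-1)"
  proof -
    fix i :: nat assume i: "ell + 1 < i" "i \<le> N"
    then have r: "i \<in> {1..N}" "i - ell - 1 \<in> {1..N}" by auto
    show "ACc i (i-ell-1) \<or> ARc i (i-ell-1)" using arrow_to[OF r C3] i by simp
  qed
  show "ACc (ell+1) 1 \<or> ARc (ell+1) 1"
  proof -
    have r: "ell + 1 \<in> {1..N}" "1 \<in> {1..N}" using ellN by auto
    show ?thesis using arrow_to[OF r C4] .
  qed
qed

end

theorem lemma4p11:
  fixes M :: "nat \<Rightarrow> nat \<Rightarrow> int" and p q :: nat and c r :: "nat \<Rightarrow> int"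
    and n m :: nat and pi sigma :: "nat \<Rightarrow> nat"
    and vp hp vs hs :: "nat \<Rightarrow> real" and w u :: "nat \<Rightarrow> nat"
    and labp labs :: "nat \<times> nat \<Rightarrow> nat"
  assumes "partial_mult_matrix M p q c r"
    and "unicyclic M p q"
    and "gridded_coil M p q c r n pi vp hp w labp"
    and "gridded_coil M p q c r m sigma vs hs u labs"
    and "m < n"
  shows "\<not> labelled_embedding p q m sigma vs hs (coil_label u m) n pi vp hp (coil_label w n)"
proof
  assume emb: "labelled_embedding p q m sigma vs hs (coil_label u m) n pi vp hp (coil_label w n)"
  interpret P: gcoil M p q c r n pi vp hp w labp using assms(1,2,3) by unfold_locales
  interpret S: gcoil M p q c r m sigma vs hs u labs using assms(1,2,4) by unfold_locales
  obtain f where fm: "strict_mono_on {1..m} f" and fr: "f ` {1..m} \<subseteq> {1..n}"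
    and fv: "\<forall>a\<in>{1..m}. \<forall>b\<in>{1..m}. sigma a < sigma b \<longleftrightarrow> pi (f a) < pi (f b)"
    and fc: "\<forall>a\<in>{1..m}. \<forall>i\<in>{1..p}. \<forall>j\<in>{1..q}. in_cell vs hs sigma i j a \<longrightarrow> in_cell vp hp pi i j (f a)"
    and fl: "\<forall>a\<in>{1..m}. coil_label u m a = coil_label w n (f a)"
    using emb unfolding labelled_embedding_def by blast
  let ?ell = "cycle_len M p q"
  define g where "g t = inv_into {1..n} w (f (u t))" for t
  have ur: "\<And>t. t \<in> {1..m} \<Longrightarrow> u t \<in> {1..m}" using S.wr .
  have gr: "\<And>t. t \<in> {1..m} \<Longrightarrow> g t \<in> {1..n} \<and> w (g t) = f (u t)"
  proof -
    fix t assume t: "t \<in> {1..m}"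
    have "f (u t) \<in> {1..n}" using fr ur[OF t] by blast
    then have "f (u t) \<in> w ` {1..n}" using P.wbij unfolding bij_betw_def by simp
    then have "inv_into {1..n} w (f (u t)) \<in> {1..n}" "w (inv_into {1..n} w (f (u t))) = f (u t)"
      by (rule inv_into_into, rule f_inv_into_f)
    then show "g t \<in> {1..n} \<and> w (g t) = f (u t)" unfolding g_def by blast
  qed
  have gcell: "\<And>t. t \<in> {1..m} \<Longrightarrow> P.cellof (g t) = S.cellof t"
  proof -
    fix t assume t: "t \<in> {1..m}"
    have sc: "S.cellof t \<in> cycle_cells M p q" "in_cell vs hs sigma (fst (S.cellof t)) (snd (S.cellof t)) (u t)"
      using S.cellof[OF t] by auto
    have rg: "fst (S.cellof t) \<in> {1..p}" "snd (S.cellof t) \<in> {1..q}" using S.CCsub[OF sc(1)] by auto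
    have "in_cell vp hp pi (fst (S.cellof t)) (snd (S.cellof t)) (f (u t))" using fc ur[OF t] rg sc(2) by blast
    then have "in_cell vp hp pi (fst (S.cellof t)) (snd (S.cellof t)) (w (g t))" using gr[OF t] by simp
    then show "P.cellof (g t) = S.cellof t" using P.cellof_uniq gr[OF t] sc(1) by blast
  qed
  have gcong: "\<And>s t. s \<in> {1..m} \<Longrightarrow> t \<in> {1..m} \<Longrightarrow> s mod ?ell = t mod ?ell \<Longrightarrow> g s mod ?ell = g t mod ?ell"
  proof -
    fix s t assume a: "s \<in> {1..m}" "t \<in> {1..m}" "s mod ?ell = t mod ?ell"
    have "S.cellof s = S.cellof t" using S.cellof_eq_iff a by blast
    then have "P.cellof (g s) = P.cellof (g t)" using gcell a by simp
    then show "g s mod ?ell = g t mod ?ell" using P.cellof_eq_iff gr a by blast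
  qed
  have transfer: "\<And>s t. s \<in> {1..m} \<Longrightarrow> t \<in> {1..m} \<Longrightarrow> orient_arrow p q c r vs hs sigma (u s) (u t) \<Longrightarrow> P.arr (g s) (g t)"
  proof -
    fix s t assume a: "s \<in> {1..m}" "t \<in> {1..m}" and o: "orient_arrow p q c r vs hs sigma (u s) (u t)"
    have cs: "P.colof (g s) = S.colof s" "P.rowof (g s) = S.rowof s" "P.colof (g t) = S.colof t" "P.rowof (g t) = S.rowof t"
      using gcell a unfolding P.colof_def S.colof_def P.rowof_def S.rowof_def by auto
    have mo: "\<And>x y. x \<in> {1..m} \<Longrightarrow> y \<in> {1..m} \<Longrightarrow> u x < u y \<Longrightarrow> w (g x) < w (g y)"
      using fm ur gr by (metis strict_mono_onD)
    have vo: "\<And>x y. x \<in> {1..m} \<Longrightarrow> y \<in> {1..m} \<Longrightarrow> sigma (u x) < sigma (u y) \<Longrightarrow> pi (w (g x)) < pi (w (g y))"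
      using fv ur gr by metis
    have "S.ACc s t \<or> S.ARc s t" using S.arrow_to[OF a o] .
    then show "P.arr (g s) (g t)"
    proof
      assume "S.ACc s t"
      then have "P.ACc (g s) (g t)" unfolding S.ACc_def P.ACc_def using cs mo[OF a] mo[OF a(2) a(1)] by auto
      then show ?thesis unfolding P.arr_def by simp
    next
      assume "S.ARc s t"
      then have "P.ARc (g s) (g t)" unfolding S.ARc_def P.ARc_def using cs vo[OF a] vo[OF a(2) a(1)] by auto
      then show ?thesis unfolding P.arr_def by simp
    qed
  qed
  have mell: "?ell < m" using S.ellN .
  have key: "\<And>t. t \<in> {1..m} \<Longrightarrow> g t + 1 = g 1 + t"
  proof (rule P.main_abs[of m g])
    show "?ell < m" using mell .
    show "\<And>t. t \<in> {1..m} \<Longrightarrow> g t \<in> {1..n}" using gr by blast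
    show "\<And>s t. s \<in> {1..m} \<Longrightarrow> t \<in> {1..m} \<Longrightarrow> s mod ?ell = t mod ?ell \<Longrightarrow> g s mod ?ell = g t mod ?ell" using gcong .
    show "\<And>t. 2 \<le> t \<Longrightarrow> t \<le> m \<Longrightarrow> P.arr (g (t-1)) (g t)"
    proof -
      fix t :: nat assume t: "2 \<le> t" "t \<le> m"
      then have r: "t - 1 \<in> {1..m}" "t \<in> {1..m}" by auto
      show "P.arr (g (t-1)) (g t)" using transfer[OF r S.C2] t by simp
    qed
    show "\<And>t. ?ell + 1 < t \<Longrightarrow> t \<le> m \<Longrightarrow> P.arr (g t) (g (t - ?ell - 1))"
    proof -
      fix t :: nat assume t: "?ell + 1 < t" "t \<le> m"
      then have r: "t \<in> {1..m}" "t - ?ell - 1 \<in> {1..m}" by auto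
      show "P.arr (g t) (g (t - ?ell - 1))" using transfer[OF r S.C3] t by simp
    qed
    show "P.arr (g (?ell + 1)) (g 1)"
    proof -
      have r: "?ell + 1 \<in> {1..m}" "1 \<in> {1..m}" using mell by auto
      show ?thesis using transfer[OF r S.C4] .
    qed
  qed
  have winj: "inj_on w {1..n}" using P.wbij unfolding bij_betw_def by simp
  have ends: "\<And>t. t \<in> {1..m} \<Longrightarrow> (t = 1 \<or> t = m) \<Longrightarrow> g t = 1 \<or> g t = n"
  proof -
    fix t assume t: "t \<in> {1..m}" "t = 1 \<or> t = m"
    have "coil_label u m (u t) = Circ" unfolding coil_label_def using t by auto
    then have "coil_label w n (f (u t)) = Circ" using fl ur[OF t(1)] by simp
    then have "f (u t) = w 1 \<or> f (u t) = w n" unfolding coil_label_def by (auto split: if_splits)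
    then have "w (g t) = w 1 \<or> w (g t) = w n" using gr[OF t(1)] by simp
    moreover have "1 \<in> {1..n}" "n \<in> {1..n}" using assms(5) by auto
    ultimately show "g t = 1 \<or> g t = n" using winj gr[OF t(1)] unfolding inj_on_def by blast
  qed
  have r1: "1 \<in> {1..m}" "m \<in> {1..m}" using mell by auto
  have m2: "2 \<le> m" using mell P.ell3 by simp
  have e1: "g 1 = 1 \<or> g 1 = n" using ends[OF r1(1)] by simp
  have em: "g m = 1 \<or> g m = n" using ends[OF r1(2)] by simp
  have km: "g m + 1 = g 1 + m" using key[OF r1(2)] .
  have gmn: "g m \<le> n" using gr[OF r1(2)] by simp
  show False using e1 em km gmn m2 assms(5) by auto
qed

end
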